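(* Let $A \in \{0,1\}^{X\times Y}$ be a combinatorial channel and let $E=\{(x,y) : A_{x,y}=1\}$ be the edge set of its channel graph. Then \[ |X| + |Y| - |E| \le p(A). \] Moreover, for any nonempty finite sets $X$, $Y$ and any nonempty $R \subseteq Y$ with $|R| \le |X|$, there is a combinatorial channel $A \in \{0,1\}^{X\times Y}$ whose edge set satisfies $|E| = |X| + |Y| - |R|$ and such that $R$ is an output covering in $A$ (every $x \in X$ has $A_{x,y}=1$ for some $y \in R$).
   Context: A combinatorial channel is a matrix $A \in \{0,1\}^{X\times Y}$ ($X,Y$ finite) in which every row and column contains a $1$. For $y\in Y$, $N(y)=\{x : A_{x,y}=1\}$. A code is a set $C\subseteq X$ with $|N(y)\cap C|\le 1$ for all $y$, and $p(A)$ is the maximum size of a code. *)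

theory Defs
  imports Main
begin

text \<open>A 0/1 matrix A indexed by X x Y is represented by its support (edge set of the
channel graph) E = {(x,y). A_{x,y} = 1}, a subset of X \<times> Y.\<close>

definition comb_channel :: "'a set \<Rightarrow> 'b set \<Rightarrow> ('a \<times> 'b) set \<Rightarrow> bool" where
  "comb_channel X Y E \<longleftrightarrow> finite X \<and> finite Y \<and> E \<subseteq> X \<times> Y \<and>
     (\<forall>x\<in>X. \<exists>y. (x, y) \<in> E) \<and> (\<forall>y\<in>Y. \<exists>x. (x, y) \<in> E)"

definition Nbr :: "('a \<times> 'b) set \<Rightarrow> 'b \<Rightarrow> 'a set" where
  "Nbr E y = {x. (x, y) \<in> E}"

definition is_code :: "'a set \<Rightarrow> 'b set \<Rightarrow> ('a \<times> 'b) set \<Rightarrow> 'a set \<Rightarrow> bool" where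
  "is_code X Y E C \<longleftrightarrow> C \<subseteq> X \<and> (\<forall>y\<in>Y. card (Nbr E y \<inter> C) \<le> 1)"

definition p_channel :: "'a set \<Rightarrow> 'b set \<Rightarrow> ('a \<times> 'b) set \<Rightarrow> nat" where
  "p_channel X Y E = Max (card ` {C. is_code X Y E C})"

definition output_covering :: "'a set \<Rightarrow> ('a \<times> 'b) set \<Rightarrow> 'b set \<Rightarrow> bool" where
  "output_covering X E R \<longleftrightarrow> (\<forall>x\<in>X. \<exists>y\<in>R. (x, y) \<in> E)"

end

theory Submission
  imports Defs
begin

definition codeP :: "('a \<times> 'b) set \<Rightarrow> 'a set \<Rightarrow> bool" where
  "codeP E C \<longleftrightarrow> (\<forall>a\<in>C. \<forall>b\<in>C. \<forall>y. (a,y)\<in>E \<longrightarrow> (b,y)\<in>E \<longrightarrow> a=b)"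

lemma main_ind:
  assumes "finite E" "finite X"
  shows "\<exists>C\<subseteq>X. codeP E C \<and> card X + card (snd ` E) \<le> card C + card E"
  using assms(1)
proof (induction E rule: finite_induct)
  case empty
  show ?case by (rule exI[of _ X]) (auto simp: codeP_def)
next
  case (insert e F)
  obtain x y where e: "e = (x,y)" by (cases e)
  from insert.IH obtain C' where C': "C' \<subseteq> X" "codeP F C'"
    "card X + card (snd ` F) \<le> card C' + card F" by blast
  have cI: "card (insert e F) = card F + 1" using insert by simp
  have fC: "finite C'" using C'(1) assms(2) finite_subset by blast
  show ?case
  proof (cases "codeP (insert e F) C'")
    case True
    have "card (snd ` insert e F) \<le> card (snd ` F) + 1"
      using insert(1) by (simp add: card_insert_if)
    then have "card X + card (snd ` insert e F) \<le> card C' + card (insert e F)"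
      using C'(3) unfolding cI by linarith
    then show ?thesis using True C'(1) by blast
  next
    case False
    then obtain a b y0 where ab: "a\<in>C'" "b\<in>C'" "(a,y0)\<in>insert e F" "(b,y0)\<in>insert e F" "a\<noteq>b"
      unfolding codeP_def by blast
    have "x \<in> C' \<and> y \<in> snd ` F"
    proof -
      have "(a,y0) = e \<or> (b,y0) = e"
      proof (rule ccontr)
        assume "\<not> ((a,y0) = e \<or> (b,y0) = e)"
        then have "(a,y0)\<in>F" "(b,y0)\<in>F" using ab by auto
        then show False using C'(2) ab unfolding codeP_def by blast
      qed
      then show ?thesis
      proof
        assume h: "(a,y0) = e"
        then have "x = a" "y = y0" using e by auto
        moreover have "(b,y0) \<in> F" using ab h \<open>x = a\<close> by auto
        ultimately show ?thesis using ab by (auto intro: rev_image_eqI)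
      next
        assume h: "(b,y0) = e"
        then have "x = b" "y = y0" using e by auto
        moreover have "(a,y0) \<in> F" using ab h \<open>x = b\<close> by auto
        ultimately show ?thesis using ab by (auto intro: rev_image_eqI)
      qed
    qed
    hence xC: "x \<in> C'" and yF: "y \<in> snd ` F" by auto
    have sn: "snd ` insert e F = snd ` F" using yF e by auto
    have code: "codeP (insert e F) (C' - {x})"
      using C'(2) e unfolding codeP_def by auto
    have "card (C' - {x}) = card C' - 1" using xC fC by simp
    moreover have "card C' > 0" using xC fC card_gt_0_iff by blast
    ultimately have h1: "card X + card (snd ` insert e F) \<le> card (C' - {x}) + card (insert e F)"
      using C'(3) unfolding cI sn by linarith
    have h2: "C' - {x} \<subseteq> X" using C'(1) by blast
    show ?thesis by (rule exI[of _ "C' - {x}"]) (simp only: h1 h2 code)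
  qed
qed

lemma codeP_is_code:
  assumes "C \<subseteq> X" "finite X" "codeP E C"
  shows "is_code X Y E C"
proof -
  have "card (Nbr E y \<inter> C) \<le> 1" for y
  proof -
    have "finite (Nbr E y \<inter> C)" using assms finite_subset by blast
    moreover have "\<forall>a\<in>Nbr E y \<inter> C. \<forall>b\<in>Nbr E y \<inter> C. a = b"
      using assms(3) unfolding codeP_def Nbr_def by auto
    ultimately show ?thesis using card_le_Suc0_iff_eq by fastforce
  qed
  then show ?thesis using assms unfolding is_code_def by auto
qed

lemma part1:
  assumes "comb_channel X Y E"
  shows "int (card X) + int (card Y) - int (card E) \<le> int (p_channel X Y E)"
proof -
  have fX: "finite X" and fY: "finite Y" and sub: "E \<subseteq> X \<times> Y"
    and cy: "\<forall>y\<in>Y. \<exists>x. (x, y) \<in> E" using assms unfolding comb_channel_def by auto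
  have fE: "finite E" using sub fX fY finite_subset by blast
  have sY: "snd ` E = Y" using sub cy by force
  obtain C where C: "C \<subseteq> X" "codeP E C" "card X + card (snd ` E) \<le> card C + card E"
    using main_ind[OF fE fX] by blast
  have ic: "is_code X Y E C" using codeP_is_code C fX by blast
  have fin: "finite (card ` {C. is_code X Y E C})"
  proof -
    have "{C. is_code X Y E C} \<subseteq> Pow X" unfolding is_code_def by auto
    then show ?thesis using fX finite_subset by (metis finite_Pow_iff finite_imageI)
  qed
  have "card C \<le> p_channel X Y E" unfolding p_channel_def
    using ic fin by (auto intro: Max_ge)
  then show ?thesis using C(3) unfolding sY by linarith
qed

lemma part2:
  assumes "finite X" "finite Y" "X \<noteq> {}" "Y \<noteq> {}" "R \<noteq> {}" "R \<subseteq> Y" "card R \<le> card X"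
  shows "\<exists>E. comb_channel X Y E \<and> card E = card X + card Y - card R \<and> output_covering X E R"
proof -
  have fR: "finite R" using assms finite_subset by blast
  obtain g where g: "g ` R \<subseteq> X" "inj_on g R" using card_le_inj[OF fR assms(1) assms(7)] by blast
  obtain r0 where r0: "r0 \<in> R" using assms(5) by blast
  obtain x0 where x0: "x0 \<in> X" using assms(3) by blast
  define f where "f x = (if x \<in> g ` R then inv_into R g x else r0)" for x
  have fR': "f x \<in> R" for x unfolding f_def using r0 by (auto intro: inv_into_into)
  have surj: "\<exists>x\<in>X. f x = r" if "r \<in> R" for r
    using that g unfolding f_def by (intro bexI[of _ "g r"]) auto
  define E where "E = (\<lambda>x. (x, f x)) ` X \<union> (\<lambda>y. (x0, y)) ` (Y - R)"
  have disj: "(\<lambda>x. (x, f x)) ` X \<inter> (\<lambda>y. (x0, y)) ` (Y - R) = {}" using fR' by auto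
  have cE: "card E = card X + (card Y - card R)"
  proof -
    have c1: "card ((\<lambda>x. (x, f x)) ` X) = card X" by (rule card_image) (simp add: inj_on_def)
    have c2: "card ((\<lambda>y. (x0, y)) ` (Y - R)) = card (Y - R)" by (rule card_image) (simp add: inj_on_def)
    have c3: "card (Y - R) = card Y - card R" using assms(6) fR by (rule card_Diff_subset[rotated])
    have "card E = card ((\<lambda>x. (x, f x)) ` X) + card ((\<lambda>y. (x0, y)) ` (Y - R))"
      unfolding E_def by (rule card_Un_disjoint) (use assms(1,2) disj in auto)
    then show ?thesis using c1 c2 c3 by simp
  qed
  have cc: "comb_channel X Y E" unfolding comb_channel_def E_def
  proof (intro conjI ballI)
    fix y assume "y \<in> Y"
    then show "\<exists>x. (x, y) \<in> (\<lambda>x. (x, f x)) ` X \<union> (\<lambda>y. (x0, y)) ` (Y - R)"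
    proof (cases "y \<in> R")
      case True
      then obtain x where "x \<in> X" "f x = y" using surj by blast
      then show ?thesis by (intro exI[of _ x]) auto
    next
      case False
      then show ?thesis using \<open>y \<in> Y\<close> by (intro exI[of _ x0]) auto
    qed
  next
    show "finite X" "finite Y" using assms by auto
  next
    show "(\<lambda>x. (x, f x)) ` X \<union> (\<lambda>y. (x0, y)) ` (Y - R) \<subseteq> X \<times> Y"
      using fR' x0 assms(6) by blast
  next
    fix x assume "x \<in> X"
    then show "\<exists>y. (x, y) \<in> (\<lambda>x. (x, f x)) ` X \<union> (\<lambda>y. (x0, y)) ` (Y - R)"
      by blast
  qed
  have oc: "output_covering X E R" unfolding output_covering_def
  proof
    fix x assume "x \<in> X"
    then have "(x, f x) \<in> E" unfolding E_def by blast
    then show "\<exists>y\<in>R. (x, y) \<in> E" using fR'[of x] by blast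
  qed
  have "card R \<le> card Y" using assms card_mono by blast
  then have "card E = card X + card Y - card R" using cE by linarith
  then show ?thesis using cc oc by blast
qed

theorem lemma9:
  shows "(\<forall>(X::'a set) (Y::'b set) E. comb_channel X Y E \<longrightarrow>
            int (card X) + int (card Y) - int (card E) \<le> int (p_channel X Y E))
       \<and> (\<forall>(X::'a set) (Y::'b set) R. finite X \<and> finite Y \<and> X \<noteq> {} \<and> Y \<noteq> {} \<and>
            R \<noteq> {} \<and> R \<subseteq> Y \<and> card R \<le> card X \<longrightarrow>
            (\<exists>E. comb_channel X Y E \<and> card E = card X + card Y - card R \<and>
                 output_covering X E R))"
  apply (intro conjI allI impI)
   apply (erule part1)
  apply (elim conjE)
  apply (rule part2; assumption)
  done

end
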